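(* Let $\mathcal{D}$ be a triangulated category with small coproducts and let $T_1,T_2$ be exceptional objects of $\mathcal{D}$ such that (A1) $\operatorname{Hom}_{\mathcal{D}}(T_1,T_2[k])=0$ for all $k\in\mathbb{Z}$ and (A2) $\operatorname{Hom}_{\mathcal{D}}(T_2,T_1[k])=0$ for all $k\in\mathbb{Z}\setminus\{0,1\}$. Let $\alpha:T_2\to T_1[1]$ be any morphism and $T_1\to T\xrightarrow{\gamma}T_2\xrightarrow{\alpha}T_1[1]$ a triangle. Then $T$ is exceptional if and only if the map $\operatorname{End}_{\mathcal{D}}(T_2)\oplus\operatorname{End}_{\mathcal{D}}(T_1)\to\operatorname{Hom}_{\mathcal{D}}(T_2,T_1[1])$, $(f,g)\mapsto\alpha\circ f+g[1]\circ\alpha$, is surjective.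
   Context: An object $T$ is exceptional if $\operatorname{Hom}_{\mathcal{D}}(T,T[k])=0$ for all nonzero integers $k$; $[1]$ is the shift functor. *)

theory Defs
  imports Main
begin

text \<open>Objects have type 'o, morphisms type 'm; Hom X Y is the set of morphisms X -> Y.
  comp g f is the composite "g after f".  add X Y / zero X Y / neg X Y give the
  abelian group structure on Hom X Y.  Sh is the shift (an additive automorphism,
  acting on objects by Sh and on morphisms by shm).  dist X Y Z u v w means that
  X -u-> Y -v-> Z -w-> X[1] is a distinguished triangle.\<close>

definition is_zero_obj :: "('o \<Rightarrow> 'o \<Rightarrow> 'm set) \<Rightarrow> ('o \<Rightarrow> 'o \<Rightarrow> 'm) \<Rightarrow> 'o \<Rightarrow> bool" where
  "is_zero_obj Hom zero Z \<longleftrightarrow> (\<forall>X. Hom Z X = {zero Z X} \<and> Hom X Z = {zero X Z})"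

locale triangulated =
  fixes Hom :: "'o \<Rightarrow> 'o \<Rightarrow> 'm set"
    and comp :: "'m \<Rightarrow> 'm \<Rightarrow> 'm"
    and ident :: "'o \<Rightarrow> 'm"
    and add :: "'o \<Rightarrow> 'o \<Rightarrow> 'm \<Rightarrow> 'm \<Rightarrow> 'm"
    and zero :: "'o \<Rightarrow> 'o \<Rightarrow> 'm"
    and neg :: "'o \<Rightarrow> 'o \<Rightarrow> 'm \<Rightarrow> 'm"
    and Sh :: "'o \<Rightarrow> 'o"
    and shm :: "'m \<Rightarrow> 'm"
    and dist :: "'o \<Rightarrow> 'o \<Rightarrow> 'o \<Rightarrow> 'm \<Rightarrow> 'm \<Rightarrow> 'm \<Rightarrow> bool"
  assumes comp_closed: "f \<in> Hom X Y \<Longrightarrow> g \<in> Hom Y Z \<Longrightarrow> comp g f \<in> Hom X Z"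
    and comp_assoc: "f \<in> Hom W X \<Longrightarrow> g \<in> Hom X Y \<Longrightarrow> h \<in> Hom Y Z \<Longrightarrow>
          comp h (comp g f) = comp (comp h g) f"
    and ident_closed: "ident X \<in> Hom X X"
    and ident_left: "f \<in> Hom X Y \<Longrightarrow> comp (ident Y) f = f"
    and ident_right: "f \<in> Hom X Y \<Longrightarrow> comp f (ident X) = f"
    and add_closed: "f \<in> Hom X Y \<Longrightarrow> g \<in> Hom X Y \<Longrightarrow> add X Y f g \<in> Hom X Y"
    and add_assoc: "f \<in> Hom X Y \<Longrightarrow> g \<in> Hom X Y \<Longrightarrow> h \<in> Hom X Y \<Longrightarrow>
          add X Y (add X Y f g) h = add X Y f (add X Y g h)"
    and add_comm: "f \<in> Hom X Y \<Longrightarrow> g \<in> Hom X Y \<Longrightarrow> add X Y f g = add X Y g f"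
    and zero_closed: "zero X Y \<in> Hom X Y"
    and zero_left: "f \<in> Hom X Y \<Longrightarrow> add X Y (zero X Y) f = f"
    and neg_closed: "f \<in> Hom X Y \<Longrightarrow> neg X Y f \<in> Hom X Y"
    and neg_left: "f \<in> Hom X Y \<Longrightarrow> add X Y (neg X Y f) f = zero X Y"
    and comp_add_left: "f \<in> Hom X Y \<Longrightarrow> g \<in> Hom Y Z \<Longrightarrow> g' \<in> Hom Y Z \<Longrightarrow>
          comp (add Y Z g g') f = add X Z (comp g f) (comp g' f)"
    and comp_add_right: "f \<in> Hom X Y \<Longrightarrow> f' \<in> Hom X Y \<Longrightarrow> g \<in> Hom Y Z \<Longrightarrow>
          comp g (add X Y f f') = add X Z (comp g f) (comp g f')"
    and has_zero_obj: "\<exists>Z. is_zero_obj Hom zero Z"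
    and has_biproducts: "\<And>X Y. \<exists>P p1 p2 i1 i2.
          p1 \<in> Hom P X \<and> p2 \<in> Hom P Y \<and> i1 \<in> Hom X P \<and> i2 \<in> Hom Y P \<and>
          comp p1 i1 = ident X \<and> comp p2 i2 = ident Y \<and>
          comp p1 i2 = zero Y X \<and> comp p2 i1 = zero X Y \<and>
          add P P (comp i1 p1) (comp i2 p2) = ident P"
    and Sh_bij: "bij Sh"
    and shm_bij: "bij_betw shm (Hom X Y) (Hom (Sh X) (Sh Y))"
    and shm_ident: "shm (ident X) = ident (Sh X)"
    and shm_comp: "f \<in> Hom X Y \<Longrightarrow> g \<in> Hom Y Z \<Longrightarrow> shm (comp g f) = comp (shm g) (shm f)"
    and shm_add: "f \<in> Hom X Y \<Longrightarrow> g \<in> Hom X Y \<Longrightarrow>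
          shm (add X Y f g) = add (Sh X) (Sh Y) (shm f) (shm g)"
    and dist_typed: "dist X Y Z u v w \<Longrightarrow> u \<in> Hom X Y \<and> v \<in> Hom Y Z \<and> w \<in> Hom Z (Sh X)"
    and TR1_iso: "dist X Y Z u v w \<Longrightarrow>
          u' \<in> Hom X' Y' \<Longrightarrow> v' \<in> Hom Y' Z' \<Longrightarrow> w' \<in> Hom Z' (Sh X') \<Longrightarrow>
          a \<in> Hom X X' \<Longrightarrow> b \<in> Hom Y Y' \<Longrightarrow> c \<in> Hom Z Z' \<Longrightarrow>
          a' \<in> Hom X' X \<Longrightarrow> b' \<in> Hom Y' Y \<Longrightarrow> c' \<in> Hom Z' Z \<Longrightarrow>
          comp a' a = ident X \<Longrightarrow> comp a a' = ident X' \<Longrightarrow>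
          comp b' b = ident Y \<Longrightarrow> comp b b' = ident Y' \<Longrightarrow>
          comp c' c = ident Z \<Longrightarrow> comp c c' = ident Z' \<Longrightarrow>
          comp u' a = comp b u \<Longrightarrow> comp v' b = comp c v \<Longrightarrow> comp w' c = comp (shm a) w \<Longrightarrow>
          dist X' Y' Z' u' v' w'"
    and TR1_ident: "is_zero_obj Hom zero Z \<Longrightarrow> dist X X Z (ident X) (zero X Z) (zero Z (Sh X))"
    and TR1_ext: "u \<in> Hom X Y \<Longrightarrow> \<exists>Z v w. dist X Y Z u v w"
    and TR2: "u \<in> Hom X Y \<Longrightarrow>
          dist X Y Z u v w \<longleftrightarrow> dist Y Z (Sh X) v w (neg (Sh X) (Sh Y) (shm u))"
    and TR3: "dist X Y Z u v w \<Longrightarrow> dist X' Y' Z' u' v' w' \<Longrightarrow>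
          f \<in> Hom X X' \<Longrightarrow> g \<in> Hom Y Y' \<Longrightarrow> comp u' f = comp g u \<Longrightarrow>
          \<exists>h\<in>Hom Z Z'. comp v' g = comp h v \<and> comp w' h = comp (shm f) w"
    and TR4: "dist X Y Z' u j k \<Longrightarrow> dist Y Z X' v l i \<Longrightarrow> dist X Z Y' (comp v u) m n \<Longrightarrow>
          \<exists>f\<in>Hom Z' Y'. \<exists>g\<in>Hom Y' X'.
             dist Z' Y' X' f g (comp (shm j) i) \<and>
             comp f j = comp m v \<and> comp g m = l \<and> comp n f = k \<and>
             comp (shm u) n = comp i g"

text \<open>Existence of coproducts of all families indexed by subsets of the (small) type 'i.\<close>
definition has_coproducts_indexed_by ::
  "'i itself \<Rightarrow> ('o \<Rightarrow> 'o \<Rightarrow> 'm set) \<Rightarrow> ('m \<Rightarrow> 'm \<Rightarrow> 'm) \<Rightarrow> bool" where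
  "has_coproducts_indexed_by _ Hom cmp \<longleftrightarrow>
     (\<forall>(I :: 'i set) (F :: 'i \<Rightarrow> 'o). \<exists>C \<iota>.
        (\<forall>i\<in>I. \<iota> i \<in> Hom (F i) C) \<and>
        (\<forall>Y \<phi>. (\<forall>i\<in>I. \<phi> i \<in> Hom (F i) Y) \<longrightarrow>
            (\<exists>!h. h \<in> Hom C Y \<and> (\<forall>i\<in>I. cmp h (\<iota> i) = \<phi> i))))"

definition shift_int :: "('o \<Rightarrow> 'o) \<Rightarrow> int \<Rightarrow> 'o \<Rightarrow> 'o" where
  "shift_int Sh k X = (if 0 \<le> k then (Sh ^^ nat k) X else (inv Sh ^^ nat (- k)) X)"

definition exceptional :: "('o \<Rightarrow> 'o \<Rightarrow> 'm set) \<Rightarrow> ('o \<Rightarrow> 'o \<Rightarrow> 'm) \<Rightarrow> ('o \<Rightarrow> 'o) \<Rightarrow> 'o \<Rightarrow> bool" where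
  "exceptional Hom zero Sh T \<longleftrightarrow>
     (\<forall>k::int. k \<noteq> 0 \<longrightarrow> Hom T (shift_int Sh k T) = {zero T (shift_int Sh k T)})"

end

theory Submission
  imports Defs
begin

lemma shift_int_1: "shift_int Sh 1 X = Sh X"
  by (simp add: shift_int_def)

lemma shift_int_0: "shift_int Sh 0 X = X"
  by (simp add: shift_int_def)

context triangulated
begin

lemma add_zero_right: "f \<in> Hom X Y \<Longrightarrow> add X Y f (zero X Y) = f"
  using add_comm[OF _ zero_closed, of f X Y] zero_left[of f X Y] by simp

lemma add_neg_right: "f \<in> Hom X Y \<Longrightarrow> add X Y f (neg X Y f) = zero X Y"
  using add_comm[OF _ neg_closed, of f X Y f] neg_left[of f X Y] by simp

lemma add_cancel_left:
  assumes "a \<in> Hom X Y" "b \<in> Hom X Y" "c \<in> Hom X Y" "add X Y c a = add X Y c b"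
  shows "a = b"
proof -
  have "a = add X Y (add X Y (neg X Y c) c) a" using assms by (simp add: neg_left zero_left)
  also have "\<dots> = add X Y (neg X Y c) (add X Y c a)" using assms by (simp add: add_assoc neg_closed)
  also have "\<dots> = add X Y (neg X Y c) (add X Y c b)" using assms by simp
  also have "\<dots> = add X Y (add X Y (neg X Y c) c) b" using assms by (simp add: add_assoc neg_closed)
  also have "\<dots> = b" using assms by (simp add: neg_left zero_left)
  finally show ?thesis .
qed

lemma idem_zero: "a \<in> Hom X Y \<Longrightarrow> add X Y a a = a \<Longrightarrow> a = zero X Y"
  using add_cancel_left[of a X Y "zero X Y" a] add_zero_right[of a X Y] zero_closed[of X Y] by simp

lemma neg_unique: "x \<in> Hom X Y \<Longrightarrow> y \<in> Hom X Y \<Longrightarrow> add X Y x y = zero X Y \<Longrightarrow> x = neg X Y y"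
proof -
  assume a: "x \<in> Hom X Y" "y \<in> Hom X Y" "add X Y x y = zero X Y"
  have "add X Y y x = add X Y y (neg X Y y)"
    using a add_comm[of x X Y y] add_neg_right[of y X Y] by simp
  then show ?thesis using add_cancel_left[of x X Y "neg X Y y" y] a neg_closed by blast
qed

lemma neg_neg: "a \<in> Hom X Y \<Longrightarrow> neg X Y (neg X Y a) = a"
  using neg_unique[of a X Y "neg X Y a"] add_neg_right[of a X Y] neg_closed[of a X Y] by simp

lemma neg_zero: "neg X Y (zero X Y) = zero X Y"
  using neg_unique[of "zero X Y" X Y "zero X Y"] add_zero_right[of "zero X Y" X Y] zero_closed[of X Y] by simp

lemma neg_eq_zero: "a \<in> Hom X Y \<Longrightarrow> neg X Y a = zero X Y \<Longrightarrow> a = zero X Y"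
  using neg_neg[of a X Y] neg_zero[of X Y] by simp

lemma neg_inj: "a \<in> Hom X Y \<Longrightarrow> b \<in> Hom X Y \<Longrightarrow> neg X Y a = neg X Y b \<Longrightarrow> a = b"
proof -
  assume a: "a \<in> Hom X Y" and b: "b \<in> Hom X Y" and e: "neg X Y a = neg X Y b"
  have "a = neg X Y (neg X Y a)" using neg_neg[OF a] by (rule sym)
  also have "\<dots> = neg X Y (neg X Y b)" using e by (rule arg_cong)
  also have "\<dots> = b" by (rule neg_neg[OF b])
  finally show ?thesis .
qed

lemma add_neg_cancel: "a \<in> Hom X Y \<Longrightarrow> b \<in> Hom X Y \<Longrightarrow> add X Y (add X Y a (neg X Y b)) b = a"
proof -
  assume a: "a \<in> Hom X Y" and b: "b \<in> Hom X Y"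
  have "add X Y (add X Y a (neg X Y b)) b = add X Y a (add X Y (neg X Y b) b)"
    by (rule add_assoc[OF a neg_closed[OF b] b])
  also have "\<dots> = a" using neg_left[OF b] add_zero_right[OF a] by simp
  finally show ?thesis .
qed

lemma comp_zero_left: "f \<in> Hom X Y \<Longrightarrow> comp (zero Y Z) f = zero X Z"
proof -
  assume f: "f \<in> Hom X Y"
  have "comp (zero Y Z) f = comp (add Y Z (zero Y Z) (zero Y Z)) f"
    by (simp add: zero_left zero_closed)
  also have "\<dots> = add X Z (comp (zero Y Z) f) (comp (zero Y Z) f)"
    using f by (simp add: comp_add_left zero_closed)
  finally have "add X Z (comp (zero Y Z) f) (comp (zero Y Z) f) = comp (zero Y Z) f" by (rule sym)
  then show ?thesis by (rule idem_zero[OF comp_closed[OF f zero_closed]])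
qed

lemma comp_zero_right: "g \<in> Hom Y Z \<Longrightarrow> comp g (zero X Y) = zero X Z"
proof -
  assume g: "g \<in> Hom Y Z"
  have "comp g (zero X Y) = comp g (add X Y (zero X Y) (zero X Y))"
    by (simp add: zero_left zero_closed)
  also have "\<dots> = add X Z (comp g (zero X Y)) (comp g (zero X Y))"
    using g by (simp add: comp_add_right zero_closed)
  finally have "add X Z (comp g (zero X Y)) (comp g (zero X Y)) = comp g (zero X Y)" by (rule sym)
  then show ?thesis by (rule idem_zero[OF comp_closed[OF zero_closed g]])
qed

lemma comp_neg_left: "f \<in> Hom X Y \<Longrightarrow> g \<in> Hom Y Z \<Longrightarrow> comp (neg Y Z g) f = neg X Z (comp g f)"
proof -
  assume f: "f \<in> Hom X Y" and g: "g \<in> Hom Y Z"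
  have "add X Z (comp (neg Y Z g) f) (comp g f) = comp (add Y Z (neg Y Z g) g) f"
    using comp_add_left[OF f neg_closed[OF g] g] by simp
  also have "\<dots> = zero X Z" using neg_left[OF g] comp_zero_left[OF f] by simp
  finally show ?thesis by (rule neg_unique[OF comp_closed[OF f neg_closed[OF g]] comp_closed[OF f g]])
qed

lemma comp_neg_right: "f \<in> Hom X Y \<Longrightarrow> g \<in> Hom Y Z \<Longrightarrow> comp g (neg X Y f) = neg X Z (comp g f)"
proof -
  assume f: "f \<in> Hom X Y" and g: "g \<in> Hom Y Z"
  have "add X Z (comp g (neg X Y f)) (comp g f) = comp g (add X Y (neg X Y f) f)"
    using comp_add_right[OF neg_closed[OF f] f g] by simp
  also have "\<dots> = zero X Z" using neg_left[OF f] comp_zero_right[OF g] by simp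
  finally show ?thesis by (rule neg_unique[OF comp_closed[OF neg_closed[OF f] g] comp_closed[OF f g]])
qed

lemma shm_closed: "f \<in> Hom X Y \<Longrightarrow> shm f \<in> Hom (Sh X) (Sh Y)"
  by (rule bij_betw_apply[OF shm_bij])

lemma shm_zero: "shm (zero X Y) = zero (Sh X) (Sh Y)"
proof (rule idem_zero[OF shm_closed[OF zero_closed]])
  have "shm (zero X Y) = shm (add X Y (zero X Y) (zero X Y))" using zero_left[OF zero_closed[of X Y]] by simp
  also have "\<dots> = add (Sh X) (Sh Y) (shm (zero X Y)) (shm (zero X Y))"
    by (rule shm_add[OF zero_closed zero_closed])
  finally show "add (Sh X) (Sh Y) (shm (zero X Y)) (shm (zero X Y)) = shm (zero X Y)" by (rule sym)
qed

lemma shm_inj: "f \<in> Hom X Y \<Longrightarrow> g \<in> Hom X Y \<Longrightarrow> shm f = shm g \<Longrightarrow> f = g"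
  using inj_onD[OF bij_betw_imp_inj_on[OF shm_bij[of X Y]]] by blast

lemma shm_surj: "h \<in> Hom (Sh X) (Sh Y) \<Longrightarrow> \<exists>g\<in>Hom X Y. h = shm g"
proof -
  assume h: "h \<in> Hom (Sh X) (Sh Y)"
  have "Hom (Sh X) (Sh Y) = shm ` Hom X Y" using bij_betw_imp_surj_on[OF shm_bij[of X Y]] by (rule sym)
  then show ?thesis using h by blast
qed

lemma zero_hom: "Hom X Y = {zero X Y} \<Longrightarrow> f \<in> Hom X Y \<Longrightarrow> f = zero X Y"
  by blast

lemma F0:
  assumes d: "dist X Y Z u v w" shows "comp v u = zero X Z"
proof -
  obtain Zo where zo: "is_zero_obj Hom zero Zo" using has_zero_obj by blast
  have s: "dist X X Zo (ident X) (zero X Zo) (zero Zo (Sh X))" using TR1_ident[OF zo] .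
  have u: "u \<in> Hom X Y" using dist_typed[OF d] by blast
  obtain h where h: "h \<in> Hom Zo Z" "comp v u = comp h (zero X Zo)"
    using TR3[OF s d ident_closed u] u ident_right by metis
  then show ?thesis by (simp add: comp_zero_right)
qed

lemma F1:
  assumes d: "dist X Y Z u v w" and f: "f \<in> Hom W Y" and vf: "comp v f = zero W Z"
  shows "\<exists>g\<in>Hom W X. f = comp u g"
proof -
  obtain Zo where zo: "is_zero_obj Hom zero Zo" using has_zero_obj by blast
  have u: "u \<in> Hom X Y" using dist_typed[OF d] by blast
  have s: "dist W Zo (Sh W) (zero W Zo) (zero Zo (Sh W)) (neg (Sh W) (Sh W) (shm (ident W)))"
    using TR1_ident[OF zo, of W] TR2[OF ident_closed] by blast
  have t: "dist Y Z (Sh X) v w (neg (Sh X) (Sh Y) (shm u))" using d TR2[OF u] by blast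
  have c: "comp v f = comp (zero Zo Z) (zero W Zo)" using vf comp_zero_left[OF zero_closed[of W Zo], of Z] by simp
  obtain h where h: "h \<in> Hom (Sh W) (Sh X)"
    "comp (neg (Sh X) (Sh Y) (shm u)) h = comp (shm f) (neg (Sh W) (Sh W) (shm (ident W)))"
    using TR3[OF s t f zero_closed c] by blast
  have "neg (Sh W) (Sh Y) (comp (shm u) h) = neg (Sh W) (Sh Y) (shm f)"
    using h(2) h(1) comp_neg_left[OF h(1) shm_closed[OF u]] comp_neg_right[OF ident_closed shm_closed[OF f]]
    by (simp add: shm_ident ident_right[OF shm_closed[OF f]])
  then have e: "comp (shm u) h = shm f"
    using neg_inj comp_closed h(1) shm_closed u f by blast
  obtain g where g: "g \<in> Hom W X" "h = shm g" using shm_surj h(1) by blast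
  have "shm (comp u g) = shm f" using e g shm_comp u by simp
  then have "comp u g = f" using shm_inj comp_closed g(1) u f by blast
  then show ?thesis using g by blast
qed

lemma F2:
  assumes d: "dist X Y Z u v w" and g: "g \<in> Hom Y W" and gu: "comp g u = zero X W"
  shows "\<exists>h\<in>Hom Z W. g = comp h v"
proof -
  obtain Zo where zo: "is_zero_obj Hom zero Zo" using has_zero_obj by blast
  define Zp where "Zp = inv Sh Zo"
  have SZp: "Sh Zp = Zo" unfolding Zp_def using Sh_bij by (simp add: bij_is_surj surj_f_inv_f)
  have r: "dist W W (Sh Zp) (ident W) (zero W (Sh Zp))
      (neg (Sh Zp) (Sh W) (shm (zero Zp W)))"
    using TR1_ident[OF zo, of W] SZp by (simp add: shm_zero neg_zero)
  have t: "dist Zp W W (zero Zp W) (ident W) (zero W (Sh Zp))"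
    using TR2[OF zero_closed, of Zp W W "ident W" "zero W (Sh Zp)"] r by blast
  have c: "comp (zero Zp W) (zero X Zp) = comp g u" using gu comp_zero_left[OF zero_closed[of X Zp], of W] by simp
  obtain h where "h \<in> Hom Z W" "comp (ident W) g = comp h v"
    using TR3[OF d t zero_closed g c] by blast
  then show ?thesis using g ident_left by metis
qed

lemma L_contra:
  assumes d: "dist X Y Z u v w" and "Hom X W = {zero X W}" "Hom Z W = {zero Z W}"
  shows "Hom Y W = {zero Y W}"
proof -
  have u: "u \<in> Hom X Y" and v: "v \<in> Hom Y Z" using dist_typed[OF d] by auto
  have "g = zero Y W" if g: "g \<in> Hom Y W" for g
  proof -
    have "comp g u = zero X W" using assms(2) comp_closed[OF u g] by blast
    then obtain h where "h \<in> Hom Z W" "g = comp h v" using F2[OF d g] by blast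
    then show ?thesis using assms(3) comp_zero_left[OF v] by auto
  qed
  then show ?thesis using zero_closed by blast
qed

lemma L_cov:
  assumes d: "dist X Y Z u v w" and "Hom W X = {zero W X}" "Hom W Z = {zero W Z}"
  shows "Hom W Y = {zero W Y}"
proof -
  have u: "u \<in> Hom X Y" and v: "v \<in> Hom Y Z" using dist_typed[OF d] by auto
  have "f = zero W Y" if f: "f \<in> Hom W Y" for f
  proof -
    have "comp v f = zero W Z" using assms(3) comp_closed[OF f v] by blast
    then obtain g where "g \<in> Hom W X" "f = comp u g" using F1[OF d f] by blast
    then show ?thesis using assms(2) comp_zero_right[OF u] by auto
  qed
  then show ?thesis using zero_closed by blast
qed

lemma Z0_Sh: "Hom X Y = {zero X Y} \<longleftrightarrow> Hom (Sh X) (Sh Y) = {zero (Sh X) (Sh Y)}"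
proof
  assume a: "Hom X Y = {zero X Y}"
  have "Hom (Sh X) (Sh Y) = shm ` Hom X Y" using shm_bij[of X Y] by (simp add: bij_betw_def)
  then show "Hom (Sh X) (Sh Y) = {zero (Sh X) (Sh Y)}" using a by (simp add: shm_zero)
next
  assume a: "Hom (Sh X) (Sh Y) = {zero (Sh X) (Sh Y)}"
  have "f = zero X Y" if f: "f \<in> Hom X Y" for f
    using shm_inj[OF f zero_closed] shm_closed[OF f] a by (simp add: shm_zero)
  then show "Hom X Y = {zero X Y}" using zero_closed by blast
qed

lemma shift_succ: "shift_int Sh (k + 1) X = Sh (shift_int Sh k X)"
proof (cases "0 \<le> k")
  case True
  then have "nat (k+1) = Suc (nat k)" by simp
  then show ?thesis using True by (simp add: shift_int_def)
next
  case False
  have SI: "Sh (inv Sh y) = y" for y using Sh_bij by (simp add: bij_is_surj surj_f_inv_f)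
  show ?thesis
  proof (cases "k = -1")
    case True then show ?thesis by (simp add: shift_int_def SI)
  next
    case F2: False
    then have "nat (-k) = Suc (nat (- (k+1)))" using False by simp
    then show ?thesis using False F2 by (simp add: shift_int_def SI)
  qed
qed

lemma shift_pred: "shift_int Sh (k - 1) X = inv Sh (shift_int Sh k X)"
proof -
  have "shift_int Sh k X = Sh (shift_int Sh (k - 1) X)" using shift_succ[of "k - 1" X] by simp
  then show ?thesis using Sh_bij by (simp add: bij_is_inj inv_f_f)
qed

lemma shift_add: "shift_int Sh (j + k) Y = shift_int Sh j (shift_int Sh k Y)"
proof (induction j rule: int_induct[where k=0])
  case base then show ?case by (simp add: shift_int_0)
next
  case (step1 i)
  have "shift_int Sh (i + 1 + k) Y = Sh (shift_int Sh (i + k) Y)"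
    using shift_succ[of "i + k" Y] by (simp add: algebra_simps)
  then show ?case using step1 shift_succ by simp
next
  case (step2 i)
  have "shift_int Sh (i - 1 + k) Y = inv Sh (shift_int Sh (i + k) Y)"
    using shift_pred[of "i + k" Y] by (simp add: algebra_simps)
  then show ?case using step2 shift_pred by simp
qed

lemma Z0_shift: "Hom X Y = {zero X Y} \<longleftrightarrow>
   Hom (shift_int Sh j X) (shift_int Sh j Y) = {zero (shift_int Sh j X) (shift_int Sh j Y)}"
proof (induction j rule: int_induct[where k=0])
  case base then show ?case by (simp add: shift_int_0)
next
  case (step1 i) then show ?case using Z0_Sh shift_succ by simp
next
  case (step2 i)
  have SI: "Sh (inv Sh y) = y" for y using Sh_bij by (simp add: bij_is_surj surj_f_inv_f)
  show ?case using step2 Z0_Sh[of "inv Sh (shift_int Sh i X)" "inv Sh (shift_int Sh i Y)"]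
    shift_pred SI by simp
qed

lemma TL: "Hom (shift_int Sh (-k) X) Y = {zero (shift_int Sh (-k) X) Y} \<Longrightarrow>
   Hom X (shift_int Sh k Y) = {zero X (shift_int Sh k Y)}"
  using Z0_shift[of "shift_int Sh (-k) X" Y k] shift_add[of k "-k" X]
  by (simp add: shift_int_0)

lemma TL': "Hom X (shift_int Sh k Y) = {zero X (shift_int Sh k Y)} \<Longrightarrow>
   Hom (shift_int Sh (-k) X) Y = {zero (shift_int Sh (-k) X) Y}"
  using Z0_shift[of X "shift_int Sh k Y" "-k"] shift_add[of "-k" k Y]
  by (simp add: shift_int_0)

end

theorem proposition2p1:
  fixes Hom :: "'o \<Rightarrow> 'o \<Rightarrow> 'm set"
    and comp :: "'m \<Rightarrow> 'm \<Rightarrow> 'm"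
    and ident :: "'o \<Rightarrow> 'm"
    and add :: "'o \<Rightarrow> 'o \<Rightarrow> 'm \<Rightarrow> 'm \<Rightarrow> 'm"
    and zero :: "'o \<Rightarrow> 'o \<Rightarrow> 'm"
    and neg :: "'o \<Rightarrow> 'o \<Rightarrow> 'm \<Rightarrow> 'm"
    and Sh :: "'o \<Rightarrow> 'o"
    and shm :: "'m \<Rightarrow> 'm"
    and dist :: "'o \<Rightarrow> 'o \<Rightarrow> 'o \<Rightarrow> 'm \<Rightarrow> 'm \<Rightarrow> 'm \<Rightarrow> bool"
    and T1 T2 T :: 'o
    and \<alpha> \<beta> \<gamma> :: 'm
  assumes tri: "triangulated Hom comp ident add zero neg Sh shm dist"
    and coprod: "has_coproducts_indexed_by TYPE('i) Hom comp"
    and exc1: "exceptional Hom zero Sh T1"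
    and exc2: "exceptional Hom zero Sh T2"
    and A1: "\<forall>k::int. Hom T1 (shift_int Sh k T2) = {zero T1 (shift_int Sh k T2)}"
    and A2: "\<forall>k::int. k \<notin> {0, 1} \<longrightarrow> Hom T2 (shift_int Sh k T1) = {zero T2 (shift_int Sh k T1)}"
    and alpha: "\<alpha> \<in> Hom T2 (Sh T1)"
    and triangle: "dist T1 T T2 \<beta> \<gamma> \<alpha>"
  shows "exceptional Hom zero Sh T \<longleftrightarrow>
    (\<lambda>(f, g). add T2 (Sh T1) (comp \<alpha> f) (comp (shm g) \<alpha>)) ` (Hom T2 T2 \<times> Hom T1 T1)
      = Hom T2 (Sh T1)"
proof -
  interpret triangulated Hom comp ident add zero neg Sh shm dist by (rule tri)
  have b: "\<beta> \<in> Hom T1 T" and c: "\<gamma> \<in> Hom T T2" using dist_typed[OF triangle] by auto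
  define nb where "nb = neg (Sh T1) (Sh T) (shm \<beta>)"
  define ng where "ng = neg (Sh T) (Sh T2) (shm \<gamma>)"
  have nb: "nb \<in> Hom (Sh T1) (Sh T)" unfolding nb_def by (rule neg_closed[OF shm_closed[OF b]])
  have ng: "ng \<in> Hom (Sh T) (Sh T2)" unfolding ng_def by (rule neg_closed[OF shm_closed[OF c]])
  have R1: "dist T T2 (Sh T1) \<gamma> \<alpha> nb" unfolding nb_def using TR2[OF b] triangle by blast
  have R2: "dist T2 (Sh T1) (Sh T) \<alpha> nb ng" unfolding ng_def using TR2[OF c] R1 by blast
  have R3: "dist (Sh T1) (Sh T) (Sh T2) nb ng (neg (Sh T2) (Sh (Sh T1)) (shm \<alpha>))"
    using TR2[OF alpha] R2 by blast
  have ag: "comp \<alpha> \<gamma> = zero T (Sh T1)" by (rule F0[OF R1])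
  have nba: "comp nb \<alpha> = zero T2 (Sh T)" by (rule F0[OF R2])
  have e1: "\<And>k. k \<noteq> 0 \<Longrightarrow> Hom T1 (shift_int Sh k T1) = {zero T1 (shift_int Sh k T1)}"
    using exc1 unfolding exceptional_def by blast
  have e2: "\<And>k. k \<noteq> 0 \<Longrightarrow> Hom T2 (shift_int Sh k T2) = {zero T2 (shift_int Sh k T2)}"
    using exc2 unfolding exceptional_def by blast
  have H11: "Hom T1 (Sh T1) = {zero T1 (Sh T1)}" using e1[of 1] by (simp add: shift_int_1)
  have H22: "Hom T2 (Sh T2) = {zero T2 (Sh T2)}" using e2[of 1] by (simp add: shift_int_1)
  have H12: "Hom T1 (Sh T2) = {zero T1 (Sh T2)}" using A1 shift_int_1 by metis
  have H12': "Hom T1 T2 = {zero T1 T2}" using A1 shift_int_0 by metis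
  have H1T: "Hom T1 (Sh T) = {zero T1 (Sh T)}" by (rule L_cov[OF R3 H11 H12])
  show ?thesis
  proof
    assume exT: "exceptional Hom zero Sh T"
    have HTT: "Hom T (Sh T) = {zero T (Sh T)}"
      using exT unfolding exceptional_def using shift_int_1 by (metis one_neq_zero)
    show "(\<lambda>(f, g). add T2 (Sh T1) (comp \<alpha> f) (comp (shm g) \<alpha>)) ` (Hom T2 T2 \<times> Hom T1 T1)
      = Hom T2 (Sh T1)"
    proof
      show "(\<lambda>(f, g). add T2 (Sh T1) (comp \<alpha> f) (comp (shm g) \<alpha>)) ` (Hom T2 T2 \<times> Hom T1 T1)
        \<subseteq> Hom T2 (Sh T1)"
        using alpha by (auto intro!: add_closed comp_closed shm_closed)
    next
      show "Hom T2 (Sh T1) \<subseteq> (\<lambda>(f, g). add T2 (Sh T1) (comp \<alpha> f) (comp (shm g) \<alpha>)) ` (Hom T2 T2 \<times> Hom T1 T1)"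
      proof
        fix \<chi> assume chi: "\<chi> \<in> Hom T2 (Sh T1)"
        define \<psi> where "\<psi> = comp (shm \<beta>) \<chi>"
        have psi: "\<psi> \<in> Hom T2 (Sh T)" unfolding \<psi>_def by (rule comp_closed[OF chi shm_closed[OF b]])
        have "comp \<psi> \<gamma> \<in> Hom T (Sh T)" by (rule comp_closed[OF c psi])
        then have "comp \<psi> \<gamma> = zero T (Sh T)" using HTT by blast
        then obtain \<rho> where rho: "\<rho> \<in> Hom (Sh T1) (Sh T)" "\<psi> = comp \<rho> \<alpha>"
          using F2[OF R1 psi] by blast
        obtain r where r: "r \<in> Hom T1 T" "\<rho> = shm r" using shm_surj[OF rho(1)] by blast
        have "comp \<gamma> r \<in> Hom T1 T2" by (rule comp_closed[OF r(1) c])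
        then have "comp \<gamma> r = zero T1 T2" using H12' by blast
        then obtain g0 where g0: "g0 \<in> Hom T1 T1" "r = comp \<beta> g0" using F1[OF triangle r(1)] by blast
        define x where "x = comp (shm g0) \<alpha>"
        have x: "x \<in> Hom T2 (Sh T1)" unfolding x_def by (rule comp_closed[OF alpha shm_closed[OF g0(1)]])
        have psi2: "\<psi> = comp (shm \<beta>) x"
          using rho(2) r(2) g0(2) shm_comp[OF g0(1) b] comp_assoc[OF alpha shm_closed[OF g0(1)] shm_closed[OF b]]
          unfolding x_def by simp
        define \<delta> where "\<delta> = add T2 (Sh T1) \<chi> (neg T2 (Sh T1) x)"
        have delta: "\<delta> \<in> Hom T2 (Sh T1)" unfolding \<delta>_def by (rule add_closed[OF chi neg_closed[OF x]])
        have "comp (shm \<beta>) \<delta> = add T2 (Sh T) \<psi> (comp (shm \<beta>) (neg T2 (Sh T1) x))"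
          unfolding \<delta>_def \<psi>_def by (rule comp_add_right[OF chi neg_closed[OF x] shm_closed[OF b]])
        also have "\<dots> = add T2 (Sh T) \<psi> (neg T2 (Sh T) \<psi>)"
          using comp_neg_right[OF x shm_closed[OF b]] psi2 by simp
        also have "\<dots> = zero T2 (Sh T)" by (rule add_neg_right[OF psi])
        finally have bd: "comp (shm \<beta>) \<delta> = zero T2 (Sh T)" .
        have "comp nb \<delta> = neg T2 (Sh T) (comp (shm \<beta>) \<delta>)"
          unfolding nb_def by (rule comp_neg_left[OF delta shm_closed[OF b]])
        then have "comp nb \<delta> = zero T2 (Sh T)" using bd neg_zero by simp
        then obtain f0 where f0: "f0 \<in> Hom T2 T2" "\<delta> = comp \<alpha> f0" using F1[OF R2 delta] by blast
        have "add T2 (Sh T1) (comp \<alpha> f0) (comp (shm g0) \<alpha>) = add T2 (Sh T1) \<delta> x"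
          using f0(2) x_def by simp
        also have "\<dots> = \<chi>" unfolding \<delta>_def by (rule add_neg_cancel[OF chi x])
        finally show "\<chi> \<in> (\<lambda>(f, g). add T2 (Sh T1) (comp \<alpha> f) (comp (shm g) \<alpha>)) ` (Hom T2 T2 \<times> Hom T1 T1)"
          using f0(1) g0(1) by force
      qed
    qed
  next
    assume surj: "(\<lambda>(f, g). add T2 (Sh T1) (comp \<alpha> f) (comp (shm g) \<alpha>)) ` (Hom T2 T2 \<times> Hom T1 T1)
      = Hom T2 (Sh T1)"
    have HTT: "Hom T (Sh T) = {zero T (Sh T)}"
    proof -
      have "\<phi> = zero T (Sh T)" if phi: "\<phi> \<in> Hom T (Sh T)" for \<phi>
      proof -
        have "comp \<phi> \<beta> \<in> Hom T1 (Sh T)" by (rule comp_closed[OF b phi])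
        then have "comp \<phi> \<beta> = zero T1 (Sh T)" using H1T by blast
        then obtain \<psi> where psi: "\<psi> \<in> Hom T2 (Sh T)" "\<phi> = comp \<psi> \<gamma>" using F2[OF triangle phi] by blast
        have "comp ng \<psi> \<in> Hom T2 (Sh T2)" by (rule comp_closed[OF psi(1) ng])
        then have "comp ng \<psi> = zero T2 (Sh T2)" using H22 by blast
        then obtain \<chi> where chi: "\<chi> \<in> Hom T2 (Sh T1)" "\<psi> = comp nb \<chi>" using F1[OF R3 psi(1)] by blast
        have "\<chi> \<in> (\<lambda>(f, g). add T2 (Sh T1) (comp \<alpha> f) (comp (shm g) \<alpha>)) ` (Hom T2 T2 \<times> Hom T1 T1)"
          using chi(1) surj by simp
        then obtain f g where fg: "f \<in> Hom T2 T2" "g \<in> Hom T1 T1"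
          "\<chi> = add T2 (Sh T1) (comp \<alpha> f) (comp (shm g) \<alpha>)" by (auto elim!: imageE)
        have af: "comp \<alpha> f \<in> Hom T2 (Sh T1)" by (rule comp_closed[OF fg(1) alpha])
        have sg: "shm g \<in> Hom (Sh T1) (Sh T1)" using shm_closed[OF fg(2)] .
        have ga: "comp (shm g) \<alpha> \<in> Hom T2 (Sh T1)" by (rule comp_closed[OF alpha sg])
        have "\<phi> = comp nb (comp \<chi> \<gamma>)" using psi(2) chi comp_assoc[OF c chi(1) nb] by simp
        also have "comp \<chi> \<gamma> = add T (Sh T1) (comp (comp \<alpha> f) \<gamma>) (comp (comp (shm g) \<alpha>) \<gamma>)"
          using fg(3) comp_add_left[OF c af ga] by simp
        also have "comp (comp (shm g) \<alpha>) \<gamma> = zero T (Sh T1)"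
          using comp_assoc[OF c alpha sg] ag comp_zero_right[OF sg] by simp
        also have "comp nb (add T (Sh T1) (comp (comp \<alpha> f) \<gamma>) (zero T (Sh T1)))
            = comp nb (comp (comp \<alpha> f) \<gamma>)"
          using add_zero_right[OF comp_closed[OF c af]] by simp
        also have "\<dots> = comp nb (comp \<alpha> (comp f \<gamma>))" using comp_assoc[OF c fg(1) alpha] by simp
        also have "\<dots> = comp (comp nb \<alpha>) (comp f \<gamma>)"
          by (rule comp_assoc[OF comp_closed[OF c fg(1)] alpha nb])
        also have "\<dots> = zero T (Sh T)" using nba comp_zero_left[OF comp_closed[OF c fg(1)]] by simp
        finally show ?thesis .
      qed
      then show ?thesis using zero_closed by blast
    qed
    show "exceptional Hom zero Sh T"
      unfolding exceptional_def
    proof (intro allI impI)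
      fix k :: int assume k0: "k \<noteq> 0"
      show "Hom T (shift_int Sh k T) = {zero T (shift_int Sh k T)}"
      proof (cases "k = 1")
        case True then show ?thesis using HTT by (simp add: shift_int_1)
      next
        case False
        have a: "Hom (shift_int Sh (-k) T1) T = {zero (shift_int Sh (-k) T1) T}"
          by (rule L_cov[OF triangle TL'[OF e1[OF k0]] TL'[OF A1[rule_format, of k]]])
        have a2a: "Hom T2 (shift_int Sh k T1) = {zero T2 (shift_int Sh k T1)}"
          using A2 k0 False by auto
        have a2: "Hom (shift_int Sh (-k) T2) T = {zero (shift_int Sh (-k) T2) T}"
          by (rule L_cov[OF triangle TL'[OF a2a] TL'[OF e2[OF k0]]])
        show ?thesis by (rule L_contra[OF triangle TL[OF a] TL[OF a2]])
      qed
    qed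
  qed
qed

end
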